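(* Let $X$ be a nonempty set, $Y_1$ a nonempty subset of a linear space, and $Y=\{\mu y:\mu\ge0,\ y\in Y_1\}$. Let $f:X\times Y\to\mathbb{R}$, and define $g:X\times Y_1\times[0,\infty)\to\mathbb{R}$ by $g(x,y,\mu)=f(x,\mu y)$ and $h:X\times[0,\infty)\to\mathbb{R}$ by $h(x,\mu)=\sup_{y\in Y_1}f(x,\mu y)$. Assume: (a) for every $\mu\ge0$ there exists $y_1(\mu)\in Y_1$ such that $\inf_{x\in X}g(x,y_1(\mu),\mu)=\sup_{y\in Y_1}\inf_{x\in X}g(x,y,\mu)=\inf_{x\in X}\sup_{y\in Y_1}g(x,y,\mu)$; (b) $(x^*,\mu^* )$ is a saddle point of $h$, i.e. $h(x,\mu^* )\ge h(x^*,\mu^* )\ge h(x^*,\mu)$ for all $x\in X$, $\mu\ge0$. Let $y^*=\mu^*y_1(\mu^* )$. Then $(x^*,y^* )$ is a saddle point of $f$, i.e. $f(x,y^* )\ge f(x^*,y^* )\ge f(x^*,y)$ for all $x\in X$, $y\in Y$. *)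

theory Defs
  imports "HOL-Analysis.Analysis"
begin

definition cone_of :: "'a::real_vector set \<Rightarrow> 'a set" where
  "cone_of Y1 = {mu *\<^sub>R y | mu y. mu \<ge> 0 \<and> y \<in> Y1}"

definition gfun :: "('x \<Rightarrow> 'a::real_vector \<Rightarrow> real) \<Rightarrow> 'x \<Rightarrow> 'a \<Rightarrow> real \<Rightarrow> real" where
  "gfun f x y mu = f x (mu *\<^sub>R y)"

definition hfun :: "('x \<Rightarrow> 'a::real_vector \<Rightarrow> real) \<Rightarrow> 'a set \<Rightarrow> 'x \<Rightarrow> real \<Rightarrow> ereal" where
  "hfun f Y1 x mu = (SUP y\<in>Y1. ereal (f x (mu *\<^sub>R y)))"

end

theory Submission
  imports Defs
begin

theorem lemmaA1:
  fixes X :: "'x set" and Y1 :: "'a::real_vector set"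
    and f :: "'x \<Rightarrow> 'a \<Rightarrow> real" and y1 :: "real \<Rightarrow> 'a"
    and xs :: 'x and mus :: real
  assumes "X \<noteq> {}" and "Y1 \<noteq> {}"
    and a_mem: "\<forall>mu\<ge>0. y1 mu \<in> Y1"
    and a_eq1: "\<forall>mu\<ge>0. (INF x\<in>X. ereal (gfun f x (y1 mu) mu))
                        = (SUP y\<in>Y1. INF x\<in>X. ereal (gfun f x y mu))"
    and a_eq2: "\<forall>mu\<ge>0. (SUP y\<in>Y1. INF x\<in>X. ereal (gfun f x y mu))
                        = (INF x\<in>X. SUP y\<in>Y1. ereal (gfun f x y mu))"
    and b_mem: "xs \<in> X" "mus \<ge> 0"
    and b_saddle: "\<forall>x\<in>X. \<forall>mu\<ge>0. hfun f Y1 x mus \<ge> hfun f Y1 xs mus \<and> hfun f Y1 xs mus \<ge> hfun f Y1 xs mu"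
  shows "\<forall>x\<in>X. \<forall>y\<in>cone_of Y1.
           f x (mus *\<^sub>R y1 mus) \<ge> f xs (mus *\<^sub>R y1 mus) \<and> f xs (mus *\<^sub>R y1 mus) \<ge> f xs y"
proof -
  let ?ys = "mus *\<^sub>R y1 mus"
  have ym: "y1 mus \<in> Y1" using a_mem b_mem by auto
  have v1: "(INF x\<in>X. ereal (f x ?ys)) = (INF x\<in>X. hfun f Y1 x mus)"
    using a_eq1 a_eq2 b_mem by (simp add: gfun_def hfun_def)
  have v2: "(INF x\<in>X. hfun f Y1 x mus) = hfun f Y1 xs mus"
    using b_saddle b_mem by (intro antisym INF_lower INF_greatest) auto
  have hx: "ereal (f xs ?ys) \<le> hfun f Y1 xs mus"
    unfolding hfun_def using ym by (intro SUP_upper) auto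
  have le: "hfun f Y1 xs mus \<le> ereal (f x ?ys)" if "x \<in> X" for x
  proof -
    have "(INF x\<in>X. ereal (f x ?ys)) \<le> ereal (f x ?ys)" using that by (intro INF_lower)
    then show ?thesis using v1 v2 by simp
  qed
  show ?thesis
  proof (intro ballI conjI)
    fix x assume "x \<in> X"
    show "f xs ?ys \<le> f x ?ys" using order_trans[OF hx le[OF \<open>x \<in> X\<close>]] by simp
  next
    fix y assume "y \<in> cone_of Y1"
    then obtain mu z where y: "y = mu *\<^sub>R z" "mu \<ge> 0" "z \<in> Y1" unfolding cone_of_def by auto
    have "ereal (f xs y) \<le> hfun f Y1 xs mu"
      unfolding hfun_def y(1) using y(3) by (rule SUP_upper2) simp
    also have "\<dots> \<le> hfun f Y1 xs mus" using b_saddle b_mem y by auto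
    also have "\<dots> \<le> ereal (f xs ?ys)" using le b_mem by auto
    finally show "f xs y \<le> f xs ?ys" by simp
  qed
qed

end
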